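(* Let $r\geq 1$ and let $G$ be the complete $r$-partite graph with (nonempty) stable parts $V_1,\dots,V_r$, where $|V_i|\geq|V_{i+1}|$ for all $i\in\{1,\dots,r-1\}$. Define $s_r=|V_r|$ and, for $i=r-1,r-2,\dots,1$, $s_i=\max\{1+s_{i+1},|V_i|\}$. Then \[\eta(G)=\max\Bigl\{\Bigl\lceil \tfrac{s_i}{|V_i|}\Bigr\rceil : i\in\{1,\dots,r\}\Bigr\}.\] Moreover, $\eta(G)\leq r$.
   Context: All graphs are finite, simple and undirected. The complete $r$-partite graph with parts $V_1,\dots,V_r$ has vertex set $V_1\cup\cdots\cup V_r$ (disjoint), each $V_i$ stable, and every two vertices in different parts adjacent. For a vertex $v$, $N(v)$ is its set of neighbours. For a positive integer $k$, $[k]=\{1,\dots,k\}$. For a labeling $f:V(G)\to[k]$ and $S\subseteq V(G)$, $f(S)=\sum_{u\in S}f(u)$. A labeling $f:V(G)\to[k]$ is an additive $k$-coloring if $f(N(u))\neq f(N(v))$ for every edge $(u,v)$ of $G$. The additive chromatic number $\eta(G)$ is the least $k$ for which $G$ has an additive $k$-coloring. *)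

theory Defs
  imports Complex_Main
begin

text \<open>A simple graph is given by a finite vertex set V and a symmetric irreflexive
  adjacency relation E (only its restriction to V matters).\<close>

definition nbhd :: "'a set \<Rightarrow> ('a \<Rightarrow> 'a \<Rightarrow> bool) \<Rightarrow> 'a \<Rightarrow> 'a set" where
  "nbhd V E v = {w \<in> V. E v w}"

definition additive_coloring ::
  "'a set \<Rightarrow> ('a \<Rightarrow> 'a \<Rightarrow> bool) \<Rightarrow> nat \<Rightarrow> ('a \<Rightarrow> nat) \<Rightarrow> bool" where
  "additive_coloring V E k f \<longleftrightarrow>
     (\<forall>v\<in>V. f v \<in> {1..k}) \<and>
     (\<forall>u\<in>V. \<forall>v\<in>V. E u v \<longrightarrow> sum f (nbhd V E u) \<noteq> sum f (nbhd V E v))"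

definition additive_chromatic_number :: "'a set \<Rightarrow> ('a \<Rightarrow> 'a \<Rightarrow> bool) \<Rightarrow> nat" where
  "additive_chromatic_number V E = (LEAST k. k \<ge> 1 \<and> (\<exists>f. additive_coloring V E k f))"

definition cmp_vertices :: "(nat \<Rightarrow> nat) \<Rightarrow> nat \<Rightarrow> (nat \<times> nat) set" where
  "cmp_vertices n r = {(i, j). i \<in> {1..r} \<and> j < n i}"

definition cmp_adj :: "nat \<times> nat \<Rightarrow> nat \<times> nat \<Rightarrow> bool" where
  "cmp_adj u v \<longleftrightarrow> fst u \<noteq> fst v"

text \<open>s_r = |V_r|, s_i = max (1 + s_(i+1)) |V_i|; computed via t k = s_(r-k).\<close>
primrec s_aux :: "(nat \<Rightarrow> nat) \<Rightarrow> nat \<Rightarrow> nat \<Rightarrow> nat" where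
  "s_aux n r 0 = n r"
| "s_aux n r (Suc k) = max (1 + s_aux n r k) (n (r - Suc k))"

definition s_seq :: "(nat \<Rightarrow> nat) \<Rightarrow> nat \<Rightarrow> nat \<Rightarrow> nat" where
  "s_seq n r i = s_aux n r (r - i)"

end

theory Submission imports Defs begin

lemma s_seq_last: "s_seq n r r = n r" by (simp add: s_seq_def)

lemma s_seq_step: assumes "i < r" shows "s_seq n r i = max (1 + s_seq n r (Suc i)) (n i)"
proof -
  have "r - i = Suc (r - Suc i)" using assms by simp
  moreover have "r - Suc (r - Suc i) = i" using assms by simp
  ultimately show ?thesis unfolding s_seq_def by simp
qed

lemma s_seq_prop: "i \<le> r \<Longrightarrow> (\<forall>j\<in>{i..r}. n j + (j - i) \<le> s_seq n r i) \<and> (\<exists>j\<in>{i..r}. s_seq n r i = n j + (j - i))"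
proof (induction i rule: inc_induct)
  case base
  then show ?case by (auto simp: s_seq_last)
next
  case (step m)
  have eq: "s_seq n r m = max (1 + s_seq n r (Suc m)) (n m)" using step(2) by (rule s_seq_step)
  have A: "\<forall>j\<in>{m..r}. n j + (j - m) \<le> s_seq n r m"
  proof
    fix j assume j: "j \<in> {m..r}"
    show "n j + (j - m) \<le> s_seq n r m"
    proof (cases "j = m")
      case True then show ?thesis using eq by simp
    next
      case False
      then have "j \<in> {Suc m..r}" using j by auto
      then have "n j + (j - Suc m) \<le> s_seq n r (Suc m)" using step.IH by blast
      then show ?thesis using eq False j by auto
    qed
  qed
  have B: "\<exists>j\<in>{m..r}. s_seq n r m = n j + (j - m)"
  proof (cases "n m \<ge> 1 + s_seq n r (Suc m)")
    case True then show ?thesis using eq step(2) by (intro bexI[of _ m]) auto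
  next
    case False
    obtain j where j: "j \<in> {Suc m..r}" "s_seq n r (Suc m) = n j + (j - Suc m)" using step.IH by blast
    show ?thesis using False eq j by (intro bexI[of _ j]) auto
  qed
  show ?case using A B by blast
qed

lemma n_anti: fixes n :: "nat \<Rightarrow> nat" and a b r :: nat assumes "\<forall>i\<in>{1..<r}. n i \<ge> n (i + 1)" "1 \<le> a" "a \<le> b" "b \<le> r" shows "n b \<le> n a"
  using assms(3,4)
proof (induction b rule: dec_induct)
  case base then show ?case by simp
next
  case (step m)
  then have "n (Suc m) \<le> n m" using assms(1,2) by auto
  then show ?case using step by simp
qed

lemma fill: "(m::nat) \<le> t \<Longrightarrow> t \<le> k*m \<Longrightarrow> 1 \<le> k \<Longrightarrow> \<exists>g. (\<forall>j<m. g j \<in> {1..k}) \<and> sum g {..<m} = t"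
proof (induction m arbitrary: t)
  case 0 then show ?case by auto
next
  case (Suc m)
  define c where "c = min k (t - m)"
  have c1: "1 \<le> c" "c \<le> k" "c \<le> t" using Suc.prems by (auto simp: c_def)
  have "m \<le> t - c" using Suc.prems by (auto simp: c_def)
  moreover have "t - c \<le> k*m"
  proof (cases "k \<le> t - m")
    case True then show ?thesis using Suc.prems by (auto simp: c_def)
  next
    case False then have "t - c = m" using Suc.prems by (auto simp: c_def)
    then show ?thesis using Suc.prems by simp
  qed
  ultimately obtain g where g: "\<forall>j<m. g j \<in> {1..k}" "sum g {..<m} = t - c" using Suc.IH Suc.prems(3) by blast
  have "sum (g(m := c)) {..<m} = sum g {..<m}" by (rule sum.cong) auto
  then have "sum (g(m := c)) {..<Suc m} = t" using g c1 by simp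
  moreover have "\<forall>j<Suc m. (g(m := c)) j \<in> {1..k}" using g c1 by (auto simp: less_Suc_eq)
  ultimately show ?case by blast
qed

lemma s_seq_dec: "a \<le> b \<Longrightarrow> b \<le> r \<Longrightarrow> s_seq n r b + (b - a) \<le> s_seq n r a"
proof (induction b rule: dec_induct)
  case base then show ?case by simp
next
  case (step m)
  then have "1 + s_seq n r (Suc m) \<le> s_seq n r m" using s_seq_step[of m r n] by simp
  then show ?case using step by simp
qed

lemma V_eq: "cmp_vertices n r = Sigma {1..r} (\<lambda>i. {..<n i})"
  by (auto simp: cmp_vertices_def)

lemma V_fin: "finite (cmp_vertices n r)" by (simp add: V_eq)

lemma part_sub: "a \<in> {1..r} \<Longrightarrow> {a} \<times> {..<n a} \<subseteq> cmp_vertices n r"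
  by (auto simp: cmp_vertices_def)

lemma nb_eq: "u \<in> cmp_vertices n r \<Longrightarrow>
   nbhd (cmp_vertices n r) cmp_adj u = cmp_vertices n r - {fst u} \<times> {..<n (fst u)}"
  by (auto simp: nbhd_def cmp_adj_def cmp_vertices_def)

lemma nb_sum: fixes f :: "nat \<times> nat \<Rightarrow> nat" shows "u \<in> cmp_vertices n r \<Longrightarrow>
   sum f (nbhd (cmp_vertices n r) cmp_adj u) = sum f (cmp_vertices n r) - sum f ({fst u} \<times> {..<n (fst u)})"
  apply (subst nb_eq, assumption)
  apply (rule sum_diff_nat)
   apply simp
  apply (auto simp: cmp_vertices_def)
  done

lemma part_sum_le: fixes f :: "nat \<times> nat \<Rightarrow> nat" shows "a \<in> {1..r} \<Longrightarrow> sum f ({a} \<times> {..<n a}) \<le> sum f (cmp_vertices n r)"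
  by (rule sum_mono2[OF V_fin part_sub]) auto

lemma part_bounds: fixes f :: "nat \<times> nat \<Rightarrow> nat"
  assumes "\<forall>v\<in>cmp_vertices n r. f v \<in> {1..k}" "a \<in> {1..r}"
  shows "n a \<le> sum f ({a} \<times> {..<n a})" "sum f ({a} \<times> {..<n a}) \<le> k * n a"
proof -
  have h: "\<forall>v\<in>{a} \<times> {..<n a}. f v \<in> {1..k}" using assms part_sub by blast
  have "of_nat (card ({a} \<times> {..<n a})) * 1 \<le> sum f ({a} \<times> {..<n a})"
    by (rule sum_bounded_below) (use h in auto)
  then show "n a \<le> sum f ({a} \<times> {..<n a})" by (simp add: card_cartesian_product)
  have "sum f ({a} \<times> {..<n a}) \<le> of_nat (card ({a} \<times> {..<n a})) * k"
    by (rule sum_bounded_above) (use h in auto)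
  then show "sum f ({a} \<times> {..<n a}) \<le> k * n a" by (simp add: card_cartesian_product mult.commute)
qed

lemma coloring_good:
  fixes n :: "nat \<Rightarrow> nat" and r k :: nat
  assumes n1: "\<forall>i\<in>{1..r}. n i \<ge> 1"
    and mono: "\<forall>i\<in>{1..<r}. n i \<ge> n (i + 1)"
    and col: "additive_coloring (cmp_vertices n r) cmp_adj k f"
    and i: "i \<in> {1..r}"
  shows "s_seq n r i \<le> k * n i"
proof -
  define F where "F a = sum f ({a} \<times> {..<n a})" for a
  have fv: "\<forall>v\<in>cmp_vertices n r. f v \<in> {1..k}" using col by (simp add: additive_coloring_def)
  have inj: "inj_on F {1..r}"
  proof (rule inj_onI, rule ccontr)
    fix a b assume a: "a \<in> {1..r}" and b: "b \<in> {1..r}" and eq: "F a = F b" and ne: "a \<noteq> b"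
    have ua: "(a,0) \<in> cmp_vertices n r" using a n1 by (force simp: cmp_vertices_def)
    have ub: "(b,0) \<in> cmp_vertices n r" using b n1 by (force simp: cmp_vertices_def)
    have "sum f (nbhd (cmp_vertices n r) cmp_adj (a,0)) \<noteq> sum f (nbhd (cmp_vertices n r) cmp_adj (b,0))"
      using col ua ub ne by (auto simp: additive_coloring_def cmp_adj_def)
    then show False using nb_sum[OF ua, of f] nb_sum[OF ub, of f] eq by (simp add: F_def)
  qed
  obtain j where j: "j \<in> {i..r}" "s_seq n r i = n j + (j - i)" using s_seq_prop[of i r n] i by auto
  have sub: "F ` {i..j} \<subseteq> {n j .. k * n i}"
  proof
    fix x assume "x \<in> F ` {i..j}"
    then obtain a where a: "a \<in> {i..j}" "x = F a" by blast
    have ar: "a \<in> {1..r}" using a i j by auto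
    have "n j \<le> n a" using n_anti[OF mono, of a j] a ar j by auto
    moreover have "n a \<le> n i" using n_anti[OF mono, of i a] a ar i by auto
    moreover have "n a \<le> F a" "F a \<le> k * n a" using part_bounds[OF fv ar] by (auto simp: F_def)
    moreover have "k * n a \<le> k * n i" using \<open>n a \<le> n i\<close> by simp
    ultimately show "x \<in> {n j .. k * n i}" using a by (meson atLeastAtMost_iff le_trans)
  qed
  have "inj_on F {i..j}" using inj i j by (auto intro: inj_on_subset)
  then have "card (F ` {i..j}) = Suc j - i" by (simp add: card_image)
  moreover have "card (F ` {i..j}) \<le> Suc (k * n i) - n j" using card_mono[OF _ sub] by simp
  ultimately have "Suc j - i \<le> Suc (k * n i) - n j" by simp
  then show ?thesis using j by auto
qed

lemma good_coloring:
  fixes n :: "nat \<Rightarrow> nat" and r k :: nat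
  assumes n1: "\<forall>i\<in>{1..r}. n i \<ge> 1"
    and good: "\<forall>i\<in>{1..r}. s_seq n r i \<le> k * n i"
    and k1: "1 \<le> k"
  shows "\<exists>f. additive_coloring (cmp_vertices n r) cmp_adj k f"
proof -
  have "\<forall>i. \<exists>g. i \<in> {1..r} \<longrightarrow> (\<forall>j<n i. g j \<in> {1..k}) \<and> sum g {..<n i} = s_seq n r i"
  proof
    fix i
    show "\<exists>g. i \<in> {1..r} \<longrightarrow> (\<forall>j<n i. g j \<in> {1..k}) \<and> sum g {..<n i} = s_seq n r i"
    proof (cases "i \<in> {1..r}")
      case True
      have "\<forall>j\<in>{i..r}. n j + (j - i) \<le> s_seq n r i" using s_seq_prop[of i r n] True by auto
      then have "n i + (i - i) \<le> s_seq n r i" using True by (meson atLeastAtMost_iff order_refl)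
      then show ?thesis using fill[of "n i" "s_seq n r i" k] good True k1 by auto
    qed auto
  qed
  then obtain G where G: "\<And>i. i \<in> {1..r} \<Longrightarrow> (\<forall>j<n i. G i j \<in> {1..k}) \<and> sum (G i) {..<n i} = s_seq n r i"
    by metis
  define f where "f v = G (fst v) (snd v)" for v
  have fv: "\<forall>v\<in>cmp_vertices n r. f v \<in> {1..k}" using G by (auto simp: f_def cmp_vertices_def)
  have Fa: "sum f ({a} \<times> {..<n a}) = s_seq n r a" if "a \<in> {1..r}" for a
  proof -
    have "sum f ({a} \<times> {..<n a}) = sum (G a) {..<n a}"
    proof -
      have "{a} \<times> {..<n a} = Pair a ` {..<n a}" by auto
      moreover have "inj_on (Pair a) {..<n a}" by (auto intro: inj_onI)
      ultimately show ?thesis by (simp add: sum.reindex f_def)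
    qed
    then show ?thesis using G that by simp
  qed
  have sinj: "s_seq n r a \<noteq> s_seq n r b" if "a \<in> {1..r}" "b \<in> {1..r}" "a \<noteq> b" for a b
    using that s_seq_dec[of a b r n] s_seq_dec[of b a r n] by (cases "a < b") auto
  have "additive_coloring (cmp_vertices n r) cmp_adj k f"
    unfolding additive_coloring_def
  proof (intro conjI ballI impI)
    show "\<And>v. v \<in> cmp_vertices n r \<Longrightarrow> f v \<in> {1..k}" using fv by blast
  next
    fix u v assume u: "u \<in> cmp_vertices n r" and v: "v \<in> cmp_vertices n r" and e: "cmp_adj u v"
    have fu: "fst u \<in> {1..r}" using u by (auto simp: cmp_vertices_def)
    have fvv: "fst v \<in> {1..r}" using v by (auto simp: cmp_vertices_def)
    have ne: "fst u \<noteq> fst v" using e by (simp add: cmp_adj_def)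
    have "sum f ({fst u} \<times> {..<n (fst u)}) \<noteq> sum f ({fst v} \<times> {..<n (fst v)})"
      using Fa[OF fu] Fa[OF fvv] sinj[OF fu fvv ne] by simp
    moreover have "sum f ({fst u} \<times> {..<n (fst u)}) \<le> sum f (cmp_vertices n r)"
      "sum f ({fst v} \<times> {..<n (fst v)}) \<le> sum f (cmp_vertices n r)"
      using part_sum_le[OF fu] part_sum_le[OF fvv] by auto
    ultimately show "sum f (nbhd (cmp_vertices n r) cmp_adj u) \<noteq> sum f (nbhd (cmp_vertices n r) cmp_adj v)"
      using nb_sum[OF u, of f] nb_sum[OF v, of f] by linarith
  qed
  then show ?thesis by blast
qed

lemma ceil_le_iff: "0 < m \<Longrightarrow> (\<lceil>real s / real m\<rceil> \<le> int k) = (s \<le> k * m)"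
proof -
  assume m: "0 < m"
  have "(\<lceil>real s / real m\<rceil> \<le> int k) = (real s / real m \<le> real k)" by (simp add: ceiling_le_iff)
  also have "\<dots> = (real s \<le> real k * real m)" using m by (simp add: pos_divide_le_eq)
  also have "\<dots> = (s \<le> k * m)" by (metis of_nat_le_iff of_nat_mult)
  finally show ?thesis .
qed

theorem mainTheorem3:
  fixes n :: "nat \<Rightarrow> nat" and r :: nat
  assumes "r \<ge> 1"
    and "\<forall>i\<in>{1..r}. n i \<ge> 1"
    and "\<forall>i\<in>{1..<r}. n i \<ge> n (i + 1)"
  shows "int (additive_chromatic_number (cmp_vertices n r) cmp_adj)
           = Max ((\<lambda>i. \<lceil>real (s_seq n r i) / real (n i)\<rceil>) ` {1..r})
         \<and> additive_chromatic_number (cmp_vertices n r) cmp_adj \<le> r"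
proof -
  define c where "c i = \<lceil>real (s_seq n r i) / real (n i)\<rceil>" for i
  define M where "M = Max (c ` {1..r})"
  have fin: "finite (c ` {1..r})" "c ` {1..r} \<noteq> {}" using assms(1) by auto
  have cle: "c i \<le> int k \<longleftrightarrow> s_seq n r i \<le> k * n i" if "i \<in> {1..r}" for i k
    unfolding c_def using assms(2) that by (intro ceil_le_iff) force
  have Mle: "M \<le> int k \<longleftrightarrow> (\<forall>i\<in>{1..r}. s_seq n r i \<le> k * n i)" for k
    unfolding M_def using fin cle by (simp add: Max_le_iff)
  have "1 \<in> {1..r}" using assms(1) by simp
  have c1: "c 1 \<ge> 1"
  proof -
    have "\<forall>j\<in>{1..r}. n j + (j - 1) \<le> s_seq n r 1" using s_seq_prop[of 1 r n] assms(1) by auto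
    then have "n 1 \<le> s_seq n r 1" using \<open>1 \<in> {1..r}\<close> by fastforce
    moreover have "1 \<le> n 1" using assms(2) \<open>1 \<in> {1..r}\<close> by blast
    then have "n 1 > 0" by simp
    ultimately have "real (s_seq n r 1) / real (n 1) \<ge> 1" by simp
    then show ?thesis unfolding c_def by linarith
  qed
  have M1: "M \<ge> 1" using c1 fin \<open>1 \<in> {1..r}\<close> unfolding M_def by (meson Max_ge image_eqI order_trans)
  define K where "K = nat M"
  have KM: "int K = M" using M1 by (simp add: K_def)
  have goodK: "\<forall>i\<in>{1..r}. s_seq n r i \<le> K * n i" using Mle[of K] KM by simp
  have K1: "1 \<le> K" using M1 KM by simp
  have eta: "additive_chromatic_number (cmp_vertices n r) cmp_adj = K"
    unfolding additive_chromatic_number_def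
  proof (rule Least_equality)
    show "1 \<le> K \<and> (\<exists>f. additive_coloring (cmp_vertices n r) cmp_adj K f)"
      using K1 good_coloring[OF assms(2) goodK K1] by blast
  next
    fix k assume "1 \<le> k \<and> (\<exists>f. additive_coloring (cmp_vertices n r) cmp_adj k f)"
    then obtain f where f: "additive_coloring (cmp_vertices n r) cmp_adj k f" by blast
    have "\<forall>i\<in>{1..r}. s_seq n r i \<le> k * n i"
      using coloring_good[OF assms(2) assms(3) f] by blast
    then have "M \<le> int k" using Mle by blast
    then show "K \<le> k" using KM by simp
  qed
  have goodr: "\<forall>i\<in>{1..r}. s_seq n r i \<le> r * n i"
  proof
    fix i assume i: "i \<in> {1..r}"
    obtain j where j: "j \<in> {i..r}" "s_seq n r i = n j + (j - i)" using s_seq_prop[of i r n] i by auto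
    have "n j \<le> n i" using n_anti[OF assms(3), of i j] i j by auto
    moreover have "n i \<ge> 1" using assms(2) i by auto
    moreover have "r * n i = n i + (r - 1) * n i" using assms(1)
      by (metis Suc_diff_1 less_le_trans mult_Suc zero_less_one)
    moreover have "(r - 1) * 1 \<le> (r - 1) * n i" using calculation(2) by (rule mult_le_mono2)
    moreover have "j - i \<le> r - 1" using i j by auto
    ultimately show "s_seq n r i \<le> r * n i" using j(2) by linarith
  qed
  have "K \<le> r" using Mle[of r] goodr KM by simp
  then show ?thesis using eta KM unfolding M_def c_def by simp
qed

end
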